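(* $\mathsf{AP}(R_4,R_4)=\mathsf{AP}(R_4,R_5)=\mathsf{AP}(R_5,R_4)=\mathsf{AP}(R_4,R_1)=\mathsf{AP}(R_5,R_1)=\mathsf{L}$.
   Context: Tuples in $\{0,1\}^4$ are written as strings $abcd$. The relations $R_1,\dots,R_5\subseteq\{0,1\}^4$ are $R_1=\{0000,1000,0100,1100,1010,0110,1001,0101,0011,1011,0111,1111\}$, $R_2=\{0000,1000,0100,1100,1010,0101,0011,1111\}$, $R_3=\{0000,1100,1010,0101,0011,1011,0111,1111\}$, $R_4=\{0000,1100,1010,0101,0011,1111\}$, $R_5=\{0000,1100,1010,0110,1001,0101,0011,1111\}$. For $R,S\subseteq\{0,1\}^4$, a Boolean function $f\colon\{0,1\}^n\to\{0,1\}$ is analogy-preserving relative to $(R,S)$ if for all $\mathbf{a},\mathbf{b},\mathbf{c},\mathbf{d}\in\{0,1\}^n$ with $(a_i,b_i,c_i,d_i)\in R$ for every $i$ and such that $(f(\mathbf{a}),f(\mathbf{b}),f(\mathbf{c}),x)\in S$ for some $x\in\{0,1\}$, we have $(f(\mathbf{a}),f(\mathbf{b}),f(\mathbf{c}),f(\mathbf{d}))\in S$; $\mathsf{AP}(R,S)$ is the set of all such functions of all arities. $\mathsf{L}$ is the set of affine Boolean functions $f(x_1,\dots,x_n)=c+a_1x_1+\dots+a_nx_n\pmod 2$ with $c,a_i\in\{0,1\}$. *)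

theory Defs
  imports Main
begin

type_synonym tup4 = "bool \<times> bool \<times> bool \<times> bool"

definition R1 :: "tup4 set" where
  "R1 = {(False,False,False,False),(True,False,False,False),(False,True,False,False),
         (True,True,False,False),(True,False,True,False),(False,True,True,False),
         (True,False,False,True),(False,True,False,True),(False,False,True,True),
         (True,False,True,True),(False,True,True,True),(True,True,True,True)}"

definition R2 :: "tup4 set" where
  "R2 = {(False,False,False,False),(True,False,False,False),(False,True,False,False),
         (True,True,False,False),(True,False,True,False),(False,True,False,True),
         (False,False,True,True),(True,True,True,True)}"

definition R3 :: "tup4 set" where
  "R3 = {(False,False,False,False),(True,True,False,False),(True,False,True,False),
         (False,True,False,True),(False,False,True,True),(True,False,True,True),
         (False,True,True,True),(True,True,True,True)}"

definition R4 :: "tup4 set" where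
  "R4 = {(False,False,False,False),(True,True,False,False),(True,False,True,False),
         (False,True,False,True),(False,False,True,True),(True,True,True,True)}"

definition R5 :: "tup4 set" where
  "R5 = {(False,False,False,False),(True,True,False,False),(True,False,True,False),
         (False,True,True,False),(True,False,False,True),(False,True,False,True),
         (False,False,True,True),(True,True,True,True)}"

text \<open>An n-ary Boolean function is modelled as f :: bool list => bool, of which only
  the values on lists of length n matter.\<close>

definition analogy_preserving :: "nat \<Rightarrow> tup4 set \<Rightarrow> tup4 set \<Rightarrow> (bool list \<Rightarrow> bool) \<Rightarrow> bool" where
  "analogy_preserving n R S f \<longleftrightarrow>
     (\<forall>a b c d. length a = n \<longrightarrow> length b = n \<longrightarrow> length c = n \<longrightarrow> length d = n \<longrightarrow>
        (\<forall>i<n. (a!i, b!i, c!i, d!i) \<in> R) \<longrightarrow>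
        (\<exists>x. (f a, f b, f c, x) \<in> S) \<longrightarrow>
        (f a, f b, f c, f d) \<in> S)"

definition affine_fun :: "nat \<Rightarrow> (bool list \<Rightarrow> bool) \<Rightarrow> bool" where
  "affine_fun n f \<longleftrightarrow>
     (\<exists>(c::nat) (co::nat \<Rightarrow> nat). c \<le> 1 \<and> (\<forall>i<n. co i \<le> 1) \<and>
        (\<forall>x. length x = n \<longrightarrow>
           f x = odd (c + (\<Sum>i<n. co i * (if x!i then 1 else 0)))))"

end

theory Submission
  imports Defs
begin

lemma R4_sub_R5: "R4 \<subseteq> R5" unfolding R4_def R5_def by auto

lemma AP_mono: "R \<subseteq> R' \<Longrightarrow> analogy_preserving n R' S f \<Longrightarrow> analogy_preserving n R S f"
  unfolding analogy_preserving_def by blast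

definition par :: "nat \<Rightarrow> (bool list \<Rightarrow> bool) \<Rightarrow> bool" where
  "par n f \<longleftrightarrow> (\<forall>a b c d. length a = n \<longrightarrow> length b = n \<longrightarrow> length c = n \<longrightarrow> length d = n \<longrightarrow>
        (\<forall>i<n. (a!i, b!i, c!i, d!i) \<in> R4) \<longrightarrow> ((f a = f b) = (f c = f d)))"

lemma R4_swap: "(a,b,c,d) \<in> R4 \<Longrightarrow> (c,d,a,b) \<in> R4" unfolding R4_def by auto

lemma tabA_R4: "((\<exists>x. (p,q,r,x)\<in>R4) \<longrightarrow> (p,q,r,s)\<in>R4) \<Longrightarrow> ((\<exists>x.(r,s,p,x)\<in>R4) \<longrightarrow> (r,s,p,q)\<in>R4) \<Longrightarrow> ((p=q)=(r=s))"
  by (cases p; cases q; cases r; cases s; simp add: R4_def ex_bool_eq)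

lemma tabB_R4: "(p=q)=(r=s) \<Longrightarrow> (\<exists>x. (p,q,r,x)\<in>R4) \<Longrightarrow> (p,q,r,s)\<in>R4"
  by (cases p; cases q; cases r; cases s; simp add: R4_def ex_bool_eq)

lemma tabA_R5: "((\<exists>x. (p,q,r,x)\<in>R5) \<longrightarrow> (p,q,r,s)\<in>R5) \<Longrightarrow> ((\<exists>x.(r,s,p,x)\<in>R5) \<longrightarrow> (r,s,p,q)\<in>R5) \<Longrightarrow> ((p=q)=(r=s))"
  by (cases p; cases q; cases r; cases s; simp add: R5_def ex_bool_eq)

lemma tabB_R5: "(p=q)=(r=s) \<Longrightarrow> (\<exists>x. (p,q,r,x)\<in>R5) \<Longrightarrow> (p,q,r,s)\<in>R5"
  by (cases p; cases q; cases r; cases s; simp add: R5_def ex_bool_eq)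

lemma tabA_R1: "((\<exists>x. (p,q,r,x)\<in>R1) \<longrightarrow> (p,q,r,s)\<in>R1) \<Longrightarrow> ((\<exists>x.(r,s,p,x)\<in>R1) \<longrightarrow> (r,s,p,q)\<in>R1) \<Longrightarrow> ((p=q)=(r=s))"
  by (cases p; cases q; cases r; cases s; simp add: R1_def ex_bool_eq)

lemma tabB_R1: "(p=q)=(r=s) \<Longrightarrow> (\<exists>x. (p,q,r,x)\<in>R1) \<Longrightarrow> (p,q,r,s)\<in>R1"
  by (cases p; cases q; cases r; cases s; simp add: R1_def ex_bool_eq)

lemma tabA: "S = R4 \<or> S = R5 \<or> S = R1 \<Longrightarrow>
  ((\<exists>x. (p,q,r,x)\<in>S) \<longrightarrow> (p,q,r,s)\<in>S) \<Longrightarrow> ((\<exists>x.(r,s,p,x)\<in>S) \<longrightarrow> (r,s,p,q)\<in>S) \<Longrightarrow> ((p=q)=(r=s))"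
  apply (elim disjE)
  apply (simp only:, erule (1) tabA_R4)
  apply (simp only:, erule (1) tabA_R5)
  apply (simp only:, erule (1) tabA_R1)
  done

lemma tabB: "S = R4 \<or> S = R5 \<or> S = R1 \<Longrightarrow> (p=q)=(r=s) \<Longrightarrow>
  (\<exists>x. (p,q,r,x)\<in>S) \<Longrightarrow> (p,q,r,s)\<in>S"
  apply (elim disjE)
  apply (simp only:, erule (1) tabB_R4)
  apply (simp only:, erule (1) tabB_R5)
  apply (simp only:, erule (1) tabB_R1)
  done

lemma APD: "analogy_preserving n R S f \<Longrightarrow> length a = n \<Longrightarrow> length b = n \<Longrightarrow> length c = n \<Longrightarrow> length d = n
  \<Longrightarrow> (\<forall>i<n. (a!i, b!i, c!i, d!i) \<in> R) \<Longrightarrow> (\<exists>x. (f a, f b, f c, x) \<in> S) \<longrightarrow> (f a, f b, f c, f d) \<in> S"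
  apply (unfold analogy_preserving_def)
  apply (erule allE[of _ a], erule allE[of _ b], erule allE[of _ c], erule allE[of _ d])
  by simp

lemma ap_par:
  assumes "analogy_preserving n R4 S f" "S = R4 \<or> S = R5 \<or> S = R1"
  shows "par n f"
  unfolding par_def
proof (intro allI impI)
  fix a b c d :: "bool list"
  assume l: "length a = n" "length b = n" "length c = n" "length d = n"
    and r: "\<forall>i<n. (a!i, b!i, c!i, d!i) \<in> R4"
  have r2: "\<forall>i<n. (c!i, d!i, a!i, b!i) \<in> R4" using r R4_swap by blast
  have h1: "(\<exists>x. (f a, f b, f c, x) \<in> S) \<longrightarrow> (f a, f b, f c, f d) \<in> S"
    using APD[OF assms(1) l r] .
  have h2: "(\<exists>x. (f c, f d, f a, x) \<in> S) \<longrightarrow> (f c, f d, f a, f b) \<in> S"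
    using APD[OF assms(1) l(3,4,1,2) r2] .
  show "(f a = f b) = (f c = f d)"
    using assms(2) h1 h2 tabA[of S "f a" "f b" "f c" "f d"] by blast
qed

definition zs :: "nat \<Rightarrow> bool list" where "zs n = replicate n False"
definition ev :: "nat \<Rightarrow> nat \<Rightarrow> bool list" where "ev n i = map (\<lambda>j. j = i) [0..<n]"
definition xm :: "nat \<Rightarrow> bool list \<Rightarrow> nat \<Rightarrow> bool list" where
  "xm n x m = map (\<lambda>j. x!j \<and> j < m) [0..<n]"

lemma xm_len: "length (xm n x m) = n" by (simp add: xm_def)
lemma ev_len: "length (ev n m) = n" by (simp add: ev_def)
lemma zs_len: "length (zs n) = n" by (simp add: zs_def)
lemma xm_nth: "i < n \<Longrightarrow> xm n x m ! i = (x!i \<and> i < m)" by (simp add: xm_def)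
lemma ev_nth: "i < n \<Longrightarrow> ev n m ! i = (i = m)" by (simp add: ev_def)

lemma par_affine:
  assumes p: "par n f"
  shows "affine_fun n f"
proof -
  define c :: nat where "c = (if f (zs n) then 1 else 0)"
  define co :: "nat \<Rightarrow> nat" where "co i = (if f (ev n i) = f (zs n) then 0 else 1)" for i
  have main: "m \<le> n \<Longrightarrow> f (xm n x m) = odd (c + (\<Sum>i<m. co i * (if x!i then 1 else 0)))"
    for x m
  proof (induction m)
    case 0
    have "xm n x 0 = zs n" unfolding xm_def zs_def by (simp add: map_replicate_const)
    then show ?case by (simp add: c_def)
  next
    case (Suc m)
    then have IH: "f (xm n x m) = odd (c + (\<Sum>i<m. co i * (if x!i then 1 else 0)))" by simp
    show ?case
    proof (cases "x!m")
      case False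
      have "xm n x (Suc m) = xm n x m" unfolding xm_def using False
        by (auto simp: less_Suc_eq)
      then show ?thesis using IH False by simp
    next
      case True
      have cw: "\<forall>i<n. (xm n x m ! i, xm n x (Suc m) ! i, zs n ! i, ev n m ! i) \<in> R4"
      proof (intro allI impI)
        fix i assume i: "i < n"
        show "(xm n x m ! i, xm n x (Suc m) ! i, zs n ! i, ev n m ! i) \<in> R4"
          using i True by (cases "i = m"; cases "x!i"; cases "i < m") (auto simp: xm_nth ev_nth zs_def R4_def)
      qed
      have q: "(f (xm n x m) = f (xm n x (Suc m))) = (f (zs n) = f (ev n m))"
        using p[unfolded par_def, rule_format, OF xm_len xm_len zs_len ev_len cw[rule_format]] .
      show ?thesis using IH q True
        by (auto simp: co_def)
    qed
  qed
  have fin: "f x = odd (c + (\<Sum>i<n. co i * (if x!i then 1 else 0)))" if "length x = n" for x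
  proof -
    have "xm n x n = x" unfolding xm_def using that by (auto intro: nth_equalityI)
    then show ?thesis using main[of n x] by simp
  qed
  have "c \<le> 1" "\<forall>i<n. co i \<le> 1" by (auto simp: c_def co_def)
  then show ?thesis unfolding affine_fun_def using fin by blast
qed

lemma par4: "even ((x::nat) + y + z + w) \<Longrightarrow> (odd x = odd y) = (odd z = odd w)"
  by (cases "even x"; cases "even y"; cases "even z"; simp add: even_add)

lemma affine_par5:
  assumes "affine_fun n f" "length a = n" "length b = n" "length c = n" "length d = n"
    "\<forall>i<n. (a!i, b!i, c!i, d!i) \<in> R5"
  shows "(f a = f b) = (f c = f d)"
proof -
  obtain k :: nat and co :: "nat \<Rightarrow> nat" where
    fx: "\<And>x. length x = n \<Longrightarrow> f x = odd (k + (\<Sum>i<n. co i * (if x!i then 1 else 0)))"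
    using assms(1) unfolding affine_fun_def by blast
  define h where "h x i = co i * (if x!i then 1 else 0::nat)" for x i
  define g where "g x = k + (\<Sum>i<n. h x i)" for x
  have e: "even (\<Sum>i<n. h a i + h b i + h c i + h d i)"
  proof (rule dvd_sum)
    fix i assume "i \<in> {..<n}"
    then have m: "(a!i, b!i, c!i, d!i) \<in> R5" using assms(6) by auto
    have "h a i + h b i + h c i + h d i = co i * ((if a!i then 1 else 0) + (if b!i then 1 else 0)
       + (if c!i then 1 else 0) + (if d!i then 1 else 0))"
      unfolding h_def by (simp only: distrib_left)
    moreover have "even ((if a!i then 1 else 0) + (if b!i then 1 else 0)
       + (if c!i then 1 else 0) + (if d!i then 1 else (0::nat)))"
      using m unfolding R5_def by (cases "a!i"; cases "b!i"; cases "c!i"; cases "d!i"; simp)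
    ultimately show "even (h a i + h b i + h c i + h d i)" by simp
  qed
  have s: "(\<Sum>i<n. h a i + h b i + h c i + h d i) = (\<Sum>i<n. h a i) + (\<Sum>i<n. h b i) + (\<Sum>i<n. h c i) + (\<Sum>i<n. h d i)"
    by (simp only: sum.distrib)
  have "g a + g b + g c + g d = 2 * (2 * k) + (\<Sum>i<n. h a i + h b i + h c i + h d i)"
    unfolding s g_def by simp
  then have ev: "even (g a + g b + g c + g d)" using e by simp
  have "f a = odd (g a)" using fx[OF assms(2)] unfolding g_def h_def .
  moreover have "f b = odd (g b)" using fx[OF assms(3)] unfolding g_def h_def .
  moreover have "f c = odd (g c)" using fx[OF assms(4)] unfolding g_def h_def .
  moreover have "f d = odd (g d)" using fx[OF assms(5)] unfolding g_def h_def .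
  ultimately show ?thesis using par4[OF ev] by simp
qed

lemma affine_AP:
  assumes "affine_fun n f" "R = R4 \<or> R = R5" "S = R4 \<or> S = R5 \<or> S = R1"
  shows "analogy_preserving n R S f"
  unfolding analogy_preserving_def
proof (intro allI impI)
  fix a b c d :: "bool list"
  assume l: "length a = n" "length b = n" "length c = n" "length d = n"
    and r: "\<forall>i<n. (a!i, b!i, c!i, d!i) \<in> R" and e: "\<exists>x. (f a, f b, f c, x) \<in> S"
  have "\<forall>i<n. (a!i, b!i, c!i, d!i) \<in> R5" using r assms(2) R4_sub_R5 by auto
  then have q: "(f a = f b) = (f c = f d)" using affine_par5[OF assms(1) l] by simp
  show "(f a, f b, f c, f d) \<in> S" using q e assms(3) tabB[of S "f a" "f b" "f c" "f d"] by blast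
qed

theorem mainTheorem11:
  shows "\<forall>n f. (analogy_preserving n R4 R4 f \<longleftrightarrow> affine_fun n f)
              \<and> (analogy_preserving n R4 R5 f \<longleftrightarrow> affine_fun n f)
              \<and> (analogy_preserving n R5 R4 f \<longleftrightarrow> affine_fun n f)
              \<and> (analogy_preserving n R4 R1 f \<longleftrightarrow> affine_fun n f)
              \<and> (analogy_preserving n R5 R1 f \<longleftrightarrow> affine_fun n f)"
proof (intro allI)
  fix n f
  have a: "analogy_preserving n R4 S f \<Longrightarrow> affine_fun n f" if "S = R4 \<or> S = R5 \<or> S = R1" for S
    using ap_par[OF _ that] par_affine by simp
  have b: "analogy_preserving n R5 S f \<Longrightarrow> affine_fun n f" if "S = R4 \<or> S = R5 \<or> S = R1" for S
    using a[OF that] AP_mono[OF R4_sub_R5] by simp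
  have c: "affine_fun n f \<Longrightarrow> analogy_preserving n R S f" if "R = R4 \<or> R = R5" "S = R4 \<or> S = R5 \<or> S = R1" for R S
    using affine_AP that by simp
  show "(analogy_preserving n R4 R4 f \<longleftrightarrow> affine_fun n f)
              \<and> (analogy_preserving n R4 R5 f \<longleftrightarrow> affine_fun n f)
              \<and> (analogy_preserving n R5 R4 f \<longleftrightarrow> affine_fun n f)
              \<and> (analogy_preserving n R4 R1 f \<longleftrightarrow> affine_fun n f)
              \<and> (analogy_preserving n R5 R1 f \<longleftrightarrow> affine_fun n f)"
    using a[of R4] a[of R5] a[of R1] b[of R4] b[of R1]
      c[of R4 R4] c[of R4 R5] c[of R5 R4] c[of R4 R1] c[of R5 R1] by blast
qed

end
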